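(* Let $r\ge1$, let $x_0,y_0$ be positive integers and let $\{(X_t,Y_t)\}_{t\ge 0}$ be the CA competition process with fitness ratio $r$ started at $(x_0,y_0)$. Let $\tau_1=\inf\{t\ge 0: X_t=Y_t\}$ be the time of the first tie. Then \[ \mathbb{P}[\tau_1<\infty]\le\begin{cases}1, & x_0\le y_0,\\[2pt] \dfrac{(y_0)_{x_0-y_0}}{(rx_0+y_0)_{x_0-y_0}}\left(1+\dfrac1r\right)^{x_0-y_0}, & x_0>y_0.\end{cases} \]
   Context: The CA competition process with fitness ratio $r\ge 1$ started at $(x_0,y_0)$ is the discrete-time Markov chain $\{(X_t,Y_t)\}_{t\ge0}$ on $\{(x,y)\in\mathbb{Z}^2: x\ge1,y\ge1\}$ with $(X_0,Y_0)=(x_0,y_0)$ and transition probabilities: from $(x,y)$ it moves to $(x+1,y)$ with probability $\frac{rx}{rx+y}$ and to $(x,y+1)$ with probability $\frac{y}{rx+y}$. $(x)_k=\prod_{i=0}^{k-1}(x+i)$ denotes the Pochhammer symbol (with $(x)_0=1$); $\inf\emptyset=\infty$. *)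

theory Defs
  imports Complex_Main
begin

text \<open>CA competition process with fitness ratio r: from (x,y) move to (x+1,y) with
probability r x/(r x + y) and to (x,y+1) with probability y/(r x + y).
tie_within r n x y is the probability, starting from (x,y), that the first tie time
tau_1 = inf {t >= 0. X_t = Y_t} satisfies tau_1 <= n (first-step analysis).\<close>

fun tie_within :: "real \<Rightarrow> nat \<Rightarrow> nat \<Rightarrow> nat \<Rightarrow> real" where
  "tie_within r 0 x y = (if x = y then 1 else 0)"
| "tie_within r (Suc n) x y =
     (if x = y then 1
      else (r * real x / (r * real x + real y)) * tie_within r n (Suc x) y
         + (real y / (r * real x + real y)) * tie_within r n x (Suc y))"

text \<open>P[tau_1 < infinity] = sup_n P[tau_1 <= n] (continuity from below).\<close>
definition tie_prob :: "real \<Rightarrow> nat \<Rightarrow> nat \<Rightarrow> real" where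
  "tie_prob r x y = (SUP n. tie_within r n x y)"

end

theory Submission imports Defs begin

lemma poch_ratio:
  fixes a r :: real
  assumes "a > 0" "r \<ge> 1"
  shows "pochhammer a k * (a + real k) \<le> a * pochhammer (a + r) k"
proof (induction k)
  case 0 then show ?case by simp
next
  case (Suc k)
  have nn: "pochhammer (a + r) k \<ge> 0" using assms by (intro pochhammer_nonneg) auto
  have "pochhammer a (Suc k) * (a + real (Suc k)) = (pochhammer a k * (a + real k)) * (a + real k + 1)"
    by (simp add: pochhammer_Suc algebra_simps)
  also have "\<dots> \<le> (a * pochhammer (a + r) k) * (a + real k + 1)"
    using Suc assms by (intro mult_right_mono) auto
  also have "\<dots> \<le> (a * pochhammer (a + r) k) * (a + r + real k)"
    using assms nn by (intro mult_left_mono) auto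
  also have "\<dots> = a * pochhammer (a + r) (Suc k)"
    by (simp add: pochhammer_Suc algebra_simps)
  finally show ?case .
qed

definition F :: "real \<Rightarrow> nat \<Rightarrow> nat \<Rightarrow> real" where
  "F r x y = (if x \<le> y then 1
     else pochhammer (real y) (x - y) / pochhammer (r * real x + real y) (x - y)
          * (1 + 1 / r) ^ (x - y))"

lemma key:
  fixes r :: real and y k :: nat
  assumes r: "r \<ge> 1" and y: "y \<ge> 1" and k: "k \<ge> 1"
  defines "x \<equiv> y + k"
  shows "r * real x / (r * real x + real y) * F r (Suc x) y
       + real y / (r * real x + real y) * F r x (Suc y) \<le> F r x y"
proof -
  define a where "a = r * real x + real y"
  define c where "c = 1 + 1 / r"
  obtain m where m: "k = Suc m" using k by (cases k) auto
  define Q where "Q = pochhammer (real y + 1) m"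
  define Qa where "Qa = pochhammer (a + 1) m"
  define Pa' where "Pa' = pochhammer (a + r) k"
  have a0: "a > 0" unfolding a_def using r y by (intro add_nonneg_pos) auto
  have Q0: "Q > 0" unfolding Q_def by (intro pochhammer_pos) simp
  have Qa0: "Qa > 0" unfolding Qa_def using a0 by (intro pochhammer_pos) simp
  have Pa'0: "Pa' > 0" unfolding Pa'_def using a0 r by (intro pochhammer_pos) simp
  have c0: "c > 0" unfolding c_def using r by (simp add: add_pos_pos)
  have r1: "c * r = r + 1" unfolding c_def using r by (simp add: field_simps)
  have Py: "pochhammer (real y) k = real y * Q" unfolding Q_def m by (simp add: pochhammer_rec)
  have Pa: "pochhammer a k = a * Qa" unfolding Qa_def m by (simp add: pochhammer_rec)
  have rat: "a * Qa * (a + real k) \<le> a * Pa'"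
    using poch_ratio[OF a0 r, of k] Pa unfolding Pa'_def by simp
  hence rat': "Qa * (a + real k) \<le> Pa'" using a0 by simp
  have Fxy: "F r x y = real y * Q / (a * Qa) * c ^ k"
    unfolding F_def x_def a_def c_def using k Py Pa by (simp add: a_def x_def)
  have Fxy1: "F r x (Suc y) = Q / Qa * c ^ m"
  proof (cases "m = 0")
    case True then show ?thesis unfolding F_def Q_def Qa_def x_def using m by simp
  next
    case False then show ?thesis unfolding F_def Q_def Qa_def x_def a_def c_def using m
      by (simp add: ac_simps)
  qed
  have Fx1y: "F r (Suc x) y = real y * Q * real x / (Pa' * (a + r + real k)) * c ^ Suc k"
    unfolding F_def Pa'_def x_def a_def c_def using Py
    by (simp add: pochhammer_Suc algebra_simps Suc_diff_le)
  define G where "G = real y * Q / (a * Qa) * c ^ m"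
  have G0: "G \<ge> 0" unfolding G_def using Q0 Qa0 a0 c0 by simp
  have ak: "a + real k = (r + 1) * real x" unfolding a_def x_def by (simp add: algebra_simps)
  have FG: "F r x y = G * c" unfolding Fxy G_def m by simp
  have T2: "real y / a * F r x (Suc y) = G" unfolding Fxy1 G_def by simp
  have b1: "real y * Q * real x / (Pa' * (a + r + real k))
      \<le> real y * Q * real x / (Qa * (a + real k) * (a + r + real k))"
    using rat' Q0 Qa0 a0 r Pa'0 by (intro divide_left_mono mult_right_mono mult_pos_pos) auto
  have T1: "r * real x / a * F r (Suc x) y \<le> r * real x / a * (real y * Q * real x / (Qa * (a + real k) * (a + r + real k))) * c ^ Suc k"
    unfolding Fx1y mult.assoc[symmetric] using b1 r c0 a0 by (intro mult_right_mono mult_left_mono) auto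
  have x0: "real x > 0" unfolding x_def using y by simp
  have T1': "r * real x / a * (real y * Q * real x / (Qa * (a + real k) * (a + r + real k))) * c ^ Suc k
     = G * (c * real x / (a + r + real k))"
  proof -
    have ck: "c ^ Suc k = c ^ m * c * c" by (simp add: m)
    have D0: "a + r + real k > 0" using a0 r by simp
    define E where "E = c ^ m"
    define D where "D = a + r + real k"
    have "r * real x / a * (real y * Q * real x / (Qa * ((r + 1) * real x) * D)) * (E * c * c)
       = (real y * Q / (a * Qa) * E) * ((c * r) * c * real x * real x / ((r + 1) * real x * D))"
      by (simp add: field_simps)
    also have "(c * r) * c * real x * real x / ((r + 1) * real x * D) = c * real x / D"
    proof -
      have n: "(r + 1) * real x \<noteq> 0" using x0 r by simp
      have "(c * r) * c * real x * real x / ((r + 1) * real x * D)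
          = ((c * real x) * ((r + 1) * real x)) / (D * ((r + 1) * real x))"
        unfolding r1 by (simp add: ac_simps)
      also have "\<dots> = c * real x / D" using n by simp
      finally show ?thesis .
    qed
    finally show ?thesis unfolding G_def ck ak E_def[symmetric] D_def[symmetric] .
  qed
  have last: "c * real x / (a + r + real k) \<le> c - 1"
  proof -
    have e: "a + r + real k = (r + 1) * real x + r" using ak by simp
    have pos: "(r + 1) * real x + r > 0" using r x0 by (simp add: add_pos_pos)
    have "c * real x * r = (r + 1) * real x" using r1 by (metis mult.commute mult.left_commute)
    hence "c * real x * r \<le> (r + 1) * real x + r" using r by linarith
    hence "c * real x / ((r + 1) * real x + r) \<le> 1 / r" using pos r
      by (simp add: divide_simps)
    also have "1 / r = c - 1" unfolding c_def by simp
    finally show ?thesis unfolding e .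
  qed
  have "r * real x / a * F r (Suc x) y + real y / a * F r x (Suc y) \<le> G * (c * real x / (a + r + real k)) + G"
    using T1 T1' T2 by linarith
  also have "\<dots> \<le> G * (c - 1) + G" using last G0 by (intro add_right_mono mult_left_mono) auto
  also have "\<dots> = F r x y" using FG by (simp add: algebra_simps)
  finally show ?thesis unfolding a_def .
qed
lemma F_nonneg: assumes "r \<ge> 1" "y \<ge> 1" shows "F r x y \<ge> 0"
proof -
  have "pochhammer (real y) (x - y) \<ge> 0" using assms by (intro pochhammer_nonneg) simp
  moreover have "pochhammer (r * real x + real y) (x - y) \<ge> 0" using assms by (intro pochhammer_nonneg add_nonneg_pos) auto
  moreover have "(1 + 1 / r) ^ (x - y) \<ge> 0" using assms by simp
  ultimately show ?thesis unfolding F_def by simp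
qed

lemma main:
  fixes r :: real
  assumes r: "r \<ge> 1"
  shows "y \<ge> 1 \<Longrightarrow> tie_within r n x y \<le> F r x y"
proof (induction n arbitrary: x y)
  case 0 then show ?case using F_nonneg[OF r 0, of x] by (cases "x = y") (auto simp: F_def)
next
  case (Suc n)
  show ?case
  proof (cases "x = y")
    case True then show ?thesis by (simp add: F_def)
  next
    case False
    define p where "p = r * real x / (r * real x + real y)"
    define q where "q = real y / (r * real x + real y)"
    have den: "r * real x + real y > 0" using r Suc.prems by (intro add_nonneg_pos) auto
    have p0: "p \<ge> 0" unfolding p_def using r den by simp
    have q0: "q \<ge> 0" unfolding q_def using den by simp
    have pq: "p + q = 1" unfolding p_def q_def add_divide_distrib[symmetric] using den by simp
    have I1: "tie_within r n (Suc x) y \<le> F r (Suc x) y" using Suc by blast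
    have I2: "tie_within r n x (Suc y) \<le> F r x (Suc y)" using Suc by simp
    have T: "tie_within r (Suc n) x y = p * tie_within r n (Suc x) y + q * tie_within r n x (Suc y)"
      using False unfolding p_def q_def by simp
    have B: "tie_within r (Suc n) x y \<le> p * F r (Suc x) y + q * F r x (Suc y)"
      unfolding T using I1 I2 p0 q0 by (intro add_mono mult_left_mono) auto
    show ?thesis
    proof (cases "x < y")
      case True
      hence "F r (Suc x) y = 1" "F r x (Suc y) = 1" "F r x y = 1" by (auto simp: F_def)
      then show ?thesis using B pq by simp
    next
      case xy: False
      with False have "x > y" by simp
      define k where "k = x - y"
      have k: "k \<ge> 1" "x = y + k" using \<open>x > y\<close> unfolding k_def by auto
      have "p * F r (Suc x) y + q * F r x (Suc y) \<le> F r x y"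
        using key[OF r Suc.prems k(1)] unfolding p_def q_def k(2) by simp
      then show ?thesis using B by linarith
    qed
  qed
qed

theorem lemma4:
  fixes r :: real and x0 y0 :: nat
  assumes "r \<ge> 1" and "x0 \<ge> 1" and "y0 \<ge> 1"
  shows "tie_prob r x0 y0 \<le>
    (if x0 \<le> y0 then 1
     else pochhammer (real y0) (x0 - y0) / pochhammer (r * real x0 + real y0) (x0 - y0)
          * (1 + 1 / r) ^ (x0 - y0))"
proof -
  have "tie_prob r x0 y0 \<le> F r x0 y0"
    unfolding tie_prob_def by (rule cSUP_least) (use main[OF assms(1) assms(3)] in auto)
  then show ?thesis unfolding F_def .
qed

end
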